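(* Let $t\geq 7$ and $n\geq 2t-2$ be integers. Then the generic second symmetric power of $U_n^t$ is not the unique maximal element, with respect to the weak order, in the family of all second symmetric powers of $U_n^t$.
   Context: Let $V$ be a set with $|V|=n$ and let $U_n^t$ be the uniform matroid of rank $t$ on $V$. Let $K_V^{\circ}$ be the complete graph on $V$ with a loop $\{v,v\}$ added at each vertex $v$. For $v\in V$ and $X\subseteq V$ put $vX=\{\{v,x\}:x\in X\}\subseteq E(K_V^\circ)$. Given a matroid $M$ on $V$ of rank $t$, a matroid $N$ on $E(K_V^\circ)$ is a second symmetric power of $M$ if (S1) $N$ has rank $\binom{t+1}{2}$, and (S2) $r_M(X)=r_N(vX)$ for all $X\subseteq V$ and all $v\in V$. The generic second symmetric power of $U_n^t$ is the linear matroid on $E(K_V^\circ)$ obtained by choosing generic vectors $p_v\in\mathbb{R}^t$ ($v\in V$) and representing each element $\{u,v\}$ (including loops $u=v$) by the symmetric matrix $p_up_v^T+p_vp_u^T$. For matroids $M_1,M_2$ on the same ground set, the weak order is $M_1\preceq M_2$ iff every independent set of $M_1$ is independent in $M_2$. *)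

theory Defs
  imports Complex_Main
begin

definition matroid :: "'b set \<Rightarrow> ('b set \<Rightarrow> bool) \<Rightarrow> bool" where
  "matroid E indep \<longleftrightarrow>
     finite E \<and>
     (\<forall>I. indep I \<longrightarrow> I \<subseteq> E) \<and>
     indep {} \<and>
     (\<forall>I J. indep J \<and> I \<subseteq> J \<longrightarrow> indep I) \<and>
     (\<forall>I J. indep I \<and> indep J \<and> card I < card J \<longrightarrow>
        (\<exists>x\<in>J - I. indep (insert x I)))"

definition mrank :: "('b set \<Rightarrow> bool) \<Rightarrow> 'b set \<Rightarrow> nat" where
  "mrank indep X = Max (card ` {I. I \<subseteq> X \<and> indep I})"

definition weak_le :: "('b set \<Rightarrow> bool) \<Rightarrow> ('b set \<Rightarrow> bool) \<Rightarrow> bool" where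
  "weak_le M1 M2 \<longleftrightarrow> (\<forall>I. M1 I \<longrightarrow> M2 I)"

definition uniform_indep :: "'a set \<Rightarrow> nat \<Rightarrow> 'a set \<Rightarrow> bool" where
  "uniform_indep V t I \<longleftrightarrow> I \<subseteq> V \<and> card I \<le> t"

text \<open>Edges of K_V with a loop at every vertex: sets {u,v} with u,v in V (loops are {v}).\<close>
definition loop_edges :: "'a set \<Rightarrow> 'a set set" where
  "loop_edges V = {{u, v} | u v. u \<in> V \<and> v \<in> V}"

definition star :: "'a \<Rightarrow> 'a set \<Rightarrow> 'a set set" where
  "star v X = {{v, x} | x. x \<in> X}"

definition second_sym_power ::
  "'a set \<Rightarrow> nat \<Rightarrow> ('a set \<Rightarrow> bool) \<Rightarrow> ('a set set \<Rightarrow> bool) \<Rightarrow> bool" where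
  "second_sym_power V t M N \<longleftrightarrow>
     matroid (loop_edges V) N \<and>
     mrank N (loop_edges V) = (t + 1) choose 2 \<and>
     (\<forall>X v. X \<subseteq> V \<and> v \<in> V \<longrightarrow> mrank M X = mrank N (star v X))"

text \<open>The symmetric t x t matrix p_u p_v^T + p_v p_u^T attached to an edge e = {u,v};
  vectors in R^t are functions nat => real of which only the coordinates < t matter.\<close>
definition sym_mat :: "('a \<Rightarrow> nat \<Rightarrow> real) \<Rightarrow> 'a set \<Rightarrow> nat \<Rightarrow> nat \<Rightarrow> real" where
  "sym_mat p e i j =
     (case (SOME (u, v). e = {u, v}) of (u, v) \<Rightarrow> p u i * p v j + p v i * p u j)"

definition sym_lin_indep :: "nat \<Rightarrow> ('a \<Rightarrow> nat \<Rightarrow> real) \<Rightarrow> 'a set set \<Rightarrow> bool" where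
  "sym_lin_indep t p F \<longleftrightarrow>
     (\<forall>c. (\<forall>i<t. \<forall>j<t. (\<Sum>e\<in>F. c e * sym_mat p e i j) = 0) \<longrightarrow> (\<forall>e\<in>F. c e = 0))"

text \<open>Since independence of a set is a Zariski-open condition on p, a set is
  independent for generic p iff it is independent for some p.\<close>
definition generic_sym_power :: "'a set \<Rightarrow> nat \<Rightarrow> 'a set set \<Rightarrow> bool" where
  "generic_sym_power V t F \<longleftrightarrow>
     F \<subseteq> loop_edges V \<and> (\<exists>p. sym_lin_indep t p F)"

definition unique_maximal_sym_power ::
  "'a set \<Rightarrow> nat \<Rightarrow> ('a set \<Rightarrow> bool) \<Rightarrow> ('a set set \<Rightarrow> bool) \<Rightarrow> bool" where
  "unique_maximal_sym_power V t M G \<longleftrightarrow>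
     second_sym_power V t M G \<and>
     (\<forall>N. second_sym_power V t M N \<and> weak_le G N \<longrightarrow> N = G) \<and>
     (\<forall>N. second_sym_power V t M N \<and>
          (\<forall>N'. second_sym_power V t M N' \<and> weak_le N N' \<longrightarrow> N' = N) \<longrightarrow> N = G)"

end

theory Submission
  imports Defs "HOL-Library.Function_Algebras" "HOL-Computational_Algebra.Polynomial"
begin


definition fscale :: "real \<Rightarrow> ('b \<Rightarrow> real) \<Rightarrow> ('b \<Rightarrow> real)" where
  "fscale c f = (\<lambda>x. c * f x)"

interpretation fv: vector_space "fscale :: real \<Rightarrow> ('b \<Rightarrow> real) \<Rightarrow> ('b \<Rightarrow> real)"
  by unfold_locales (auto simp: fscale_def algebra_simps)

lemma sum_fun_apply: "(\<Sum>e\<in>I. (f e :: 'b \<Rightarrow> real)) x = (\<Sum>e\<in>I. f e x)"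
  by (induction I rule: infinite_finite_induct) auto

lemma fscale_apply[simp]: "fscale c f x = c * f x"
  by (simp add: fscale_def)




definition pr :: "nat \<Rightarrow> (nat \<Rightarrow> real) \<Rightarrow> real poly \<Rightarrow> real" where
  "pr t w P = (\<Sum>i<t. w i * coeff P i)"

definition gam :: "nat \<Rightarrow> real \<Rightarrow> nat \<Rightarrow> real" where
  "gam t s = (\<lambda>i. if i < t then s ^ i else 0)"

lemma poly_sum_lt:
  fixes P :: "real poly"
  assumes "degree P < t"
  shows "poly P s = (\<Sum>i<t. coeff P i * s ^ i)"
proof -
  have "poly P s = (\<Sum>i\<le>degree P. coeff P i * s ^ i)" by (rule poly_altdef)
  also have "\<dots> = (\<Sum>i<t. coeff P i * s ^ i)"
    apply (rule sum.mono_neutral_left)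
    using assms by (auto simp: coeff_eq_0)
  finally show ?thesis .
qed

lemma pr_gam: "degree P < t \<Longrightarrow> pr t (gam t s) P = poly P s"
  by (simp add: pr_def gam_def poly_sum_lt mult.commute)

lemma pr_add: "pr t (u + v) P = pr t u P + pr t v P"
  by (simp add: pr_def algebra_simps sum.distrib)

lemma pair_vec:
  assumes "\<forall>i<t. (\<Sum>x\<in>X. c x * w x i) = 0"
  shows "(\<Sum>x\<in>X. c x * pr t (w x) P) = 0"
proof -
  have "(\<Sum>x\<in>X. c x * pr t (w x) P) = (\<Sum>i<t. coeff P i * (\<Sum>x\<in>X. c x * w x i))"
    unfolding pr_def by (simp add: sum_distrib_left sum_distrib_right mult.commute mult.left_commute sum.swap[of _ X])
  also have "\<dots> = 0" using assms by simp
  finally show ?thesis .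
qed

definition lin :: "'x set \<Rightarrow> ('x \<Rightarrow> real) \<Rightarrow> real poly" where
  "lin X \<sigma> = (\<Prod>x\<in>X. [:- \<sigma> x, 1:])"

lemma degree_lin: "finite X \<Longrightarrow> degree (lin X \<sigma>) \<le> card X"
proof -
  assume "finite X"
  then have "degree (lin X \<sigma>) \<le> sum (degree \<circ> (\<lambda>x. [:- \<sigma> x, 1:])) X"
    unfolding lin_def by (rule degree_prod_sum_le)
  also have "\<dots> = card X" by simp
  finally show ?thesis .
qed

lemma poly_lin: "poly (lin X \<sigma>) s = (\<Prod>x\<in>X. s - \<sigma> x)"
  by (simp add: lin_def poly_prod)

lemma poly_lin_zero: "finite X \<Longrightarrow> x \<in> X \<Longrightarrow> poly (lin X \<sigma>) (\<sigma> x) = 0"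
  by (auto simp: poly_lin intro: prod_zero)

lemma poly_lin_nz: "finite X \<Longrightarrow> (\<forall>x\<in>X. \<sigma> x \<noteq> s) \<Longrightarrow> poly (lin X \<sigma>) s \<noteq> 0"
  by (auto simp: poly_lin)

lemma vandermonde:
  fixes \<sigma> :: "'x \<Rightarrow> real"
  assumes fin: "finite X" and card: "card X \<le> t" and inj: "inj_on \<sigma> X"
    and rel: "\<forall>i<t. (\<Sum>x\<in>X. c x * \<sigma> x ^ i) = 0" and x0: "x0 \<in> X"
  shows "c x0 = 0"
proof -
  let ?P = "lin (X - {x0}) \<sigma>"
  have deg: "degree ?P < t"
    using degree_lin[of "X - {x0}" \<sigma>] fin card x0
    by (metis card_Diff1_less finite_Diff le_less_trans less_le_trans)
  have rel': "\<forall>i<t. (\<Sum>x\<in>X. c x * gam t (\<sigma> x) i) = 0"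
    using rel by (simp add: gam_def)
  have "(\<Sum>x\<in>X. c x * pr t (gam t (\<sigma> x)) ?P) = 0"
    by (rule pair_vec[OF rel'])
  then have "(\<Sum>x\<in>X. c x * poly ?P (\<sigma> x)) = 0"
    using deg by (simp add: pr_gam)
  moreover have "(\<Sum>x\<in>X. c x * poly ?P (\<sigma> x)) = c x0 * poly ?P (\<sigma> x0)"
    apply (rule sum.remove[OF fin x0, THEN trans])
    using fin by (auto intro!: sum.neutral poly_lin_zero)
  moreover have "poly ?P (\<sigma> x0) \<noteq> 0"
    apply (rule poly_lin_nz)
    using fin inj x0 by (auto simp: inj_on_def)
  ultimately show ?thesis by simp
qed



lemma edge_case_eq:
  assumes sym: "\<And>u v. f u v = f v u"
  shows "(case SOME (u, v). {a, b} = {u, v} of (u, v) \<Rightarrow> f u v) = f a b"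
proof -
  define p where "p = (SOME (u, v). {a, b} = {u, v})"
  have "(\<lambda>(u, v). {a, b} = {u, v}) p"
    unfolding p_def by (rule someI[of _ "(a, b)"]) simp
  then have "{a, b} = {fst p, snd p}" by (cases p) simp
  then have "(fst p = a \<and> snd p = b) \<or> (fst p = b \<and> snd p = a)"
    by (auto simp: doubleton_eq_iff)
  then show ?thesis
    unfolding p_def[symmetric] using sym by (cases p) auto
qed

lemma sym_mat_eq: "sym_mat p {a, b} i j = p a i * p b j + p b i * p a j"
  unfolding sym_mat_def
  by (rule edge_case_eq) (simp add: algebra_simps)

definition Bm :: "(nat \<Rightarrow> real) \<Rightarrow> (nat \<Rightarrow> real) \<Rightarrow> nat \<times> nat \<Rightarrow> real" where
  "Bm u v = (\<lambda>(i, j). u i * v j + v i * u j)"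

lemma Bm_sym: "Bm u v = Bm v u"
  by (auto simp: Bm_def fun_eq_iff)

definition pm :: "nat \<Rightarrow> real poly \<Rightarrow> real poly \<Rightarrow> (nat \<times> nat \<Rightarrow> real) \<Rightarrow> real" where
  "pm t P Q M = (\<Sum>i<t. \<Sum>j<t. coeff P i * coeff Q j * M (i, j))"

lemma pm_Bm: "pm t P Q (Bm u v) = pr t u P * pr t v Q + pr t v P * pr t u Q"
  unfolding pm_def Bm_def pr_def
  apply (simp add: algebra_simps sum.distrib sum_distrib_left sum_distrib_right sum_product)
  by (rule sum.swap)

lemma pm_rel:
  assumes "(\<Sum>e\<in>I. fscale (c e) (\<phi> e)) = 0"
  shows "(\<Sum>e\<in>I. c e * pm t P Q (\<phi> e)) = 0"
proof -
  have z: "\<And>ij. (\<Sum>e\<in>I. c e * \<phi> e ij) = 0"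
    using fun_cong[OF assms] by (simp add: sum_fun_apply)
  have "(\<Sum>e\<in>I. c e * pm t P Q (\<phi> e)) =
        (\<Sum>i<t. \<Sum>j<t. coeff P i * coeff Q j * (\<Sum>e\<in>I. c e * \<phi> e (i, j)))"
    unfolding pm_def
    by (simp add: sum_distrib_left sum.swap[of _ I] mult.commute mult.left_commute)
  also have "\<dots> = 0" by (simp add: z)
  finally show ?thesis .
qed

lemma fam_indep:
  assumes fin: "finite I"
    and ind: "\<And>c. (\<Sum>e\<in>I. fscale (c e) (\<phi> e)) = 0 \<Longrightarrow> \<forall>e\<in>I. c e = 0"
  shows "inj_on \<phi> I \<and> fv.independent (\<phi> ` I)"
proof
  show inj: "inj_on \<phi> I"
  proof (rule inj_onI, rule ccontr)
    fix a b assume ab: "a \<in> I" "b \<in> I" "\<phi> a = \<phi> b" "a \<noteq> b"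
    define c where "c e = (if e = a then 1 else if e = b then -1 else (0::real))" for e
    have "(\<Sum>e\<in>I. fscale (c e) (\<phi> e)) = fscale (c a) (\<phi> a) + (\<Sum>e\<in>I - {a}. fscale (c e) (\<phi> e))"
      using fin ab by (simp add: sum.remove)
    also have "(\<Sum>e\<in>I - {a}. fscale (c e) (\<phi> e)) = fscale (c b) (\<phi> b) + (\<Sum>e\<in>I - {a} - {b}. fscale (c e) (\<phi> e))"
      using fin ab by (intro sum.remove) auto
    also have "(\<Sum>e\<in>I - {a} - {b}. fscale (c e) (\<phi> e)) = 0"
      by (rule sum.neutral) (auto simp: c_def fscale_def fun_eq_iff)
    finally have "(\<Sum>e\<in>I. fscale (c e) (\<phi> e)) = 0"
      using ab by (simp add: c_def fscale_def fun_eq_iff)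
    then have "c a = 0" using ind ab by blast
    then show False by (simp add: c_def)
  qed
  show "fv.independent (\<phi> ` I)"
  proof
    assume "fv.dependent (\<phi> ` I)"
    then obtain u where u: "\<exists>v\<in>\<phi> ` I. u v \<noteq> 0" "(\<Sum>v\<in>\<phi> ` I. fscale (u v) v) = 0"
      using fv.dependent_finite[of "\<phi> ` I"] fin by auto
    have "(\<Sum>e\<in>I. fscale (u (\<phi> e)) (\<phi> e)) = 0"
      using u(2) sum.reindex[OF inj, of "\<lambda>v. fscale (u v) v"] by simp
    then have "\<forall>e\<in>I. u (\<phi> e) = 0" by (rule ind)
    with u(1) show False by auto
  qed
qed



locale cfg =
  fixes V :: "'a set" and t :: nat and g :: "'a \<Rightarrow> nat"
  assumes finV: "finite V" and injg: "inj_on g V" and imgg: "g ` V = {0..<card V}"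
    and t7: "7 \<le> t" and tV: "t + 1 \<le> card V"
begin

definition s :: "'a \<Rightarrow> real" where "s x = real (g x)"
definition q :: "'a \<Rightarrow> nat \<Rightarrow> real" where "q x = gam t (s x)"
definition pi :: "nat \<Rightarrow> nat" where "pi i = (if i = 0 then 1 else i - 1)"
definition ptn :: "'a \<Rightarrow> 'a" where "ptn x = inv_into V g (pi (g x))"
definition tau :: "'a \<Rightarrow> real" where "tau x = - 1 - real (g x)"
definition y :: "'a \<Rightarrow> nat \<Rightarrow> real" where
  "y x = (if g x < t - 1 then q x + q (ptn x) else gam t (tau x))"
definition zz :: "'a \<Rightarrow> 'a \<Rightarrow> nat \<Rightarrow> real" where
  "zz v x = (if x = v then y v else q x)"
definition phi :: "'a set \<Rightarrow> nat \<times> nat \<Rightarrow> real" where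
  "phi e = (case SOME (u, v). e = {u, v} of (u, v) \<Rightarrow> Bm (q u) (zz u v))"

lemma phi_eq: "phi {a, b} = Bm (q a) (zz a b)"
  unfolding phi_def
  by (rule edge_case_eq) (auto simp: zz_def Bm_sym)

lemma inj_s: "inj_on s V"
  using injg by (auto simp: inj_on_def s_def)

lemma ptn: 
  assumes "x \<in> V" "g x < t - 1"
  shows "ptn x \<in> V" "g (ptn x) = pi (g x)" "ptn x \<noteq> x" "g (ptn x) < t - 1"
proof -
  have "pi (g x) < t - 1" using assms t7 by (auto simp: pi_def)
  then have "pi (g x) \<in> g ` V" using imgg tV by auto
  then show "ptn x \<in> V" "g (ptn x) = pi (g x)" unfolding ptn_def
    by (auto simp: inv_into_into f_inv_into_f)
  then show "ptn x \<noteq> x" by (auto simp: pi_def split: if_splits)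
  show "g (ptn x) < t - 1" using \<open>g (ptn x) = pi (g x)\<close> \<open>pi (g x) < t - 1\<close> by simp
qed

lemma q_at: "i < t \<Longrightarrow> q x i = s x ^ i"
  by (simp add: q_def gam_def)

lemma q0: "q x 0 = 1"
  using t7 by (simp add: q_at)

lemma pr_q: "degree P < t \<Longrightarrow> pr t (q x) P = poly P (s x)"
  by (simp add: q_def pr_gam)

lemma pr_y1: "degree P < t \<Longrightarrow> g x < t - 1 \<Longrightarrow> pr t (y x) P = poly P (s x) + poly P (s (ptn x))"
  by (simp add: y_def pr_add pr_q)

lemma pr_y2: "degree P < t \<Longrightarrow> \<not> g x < t - 1 \<Longrightarrow> pr t (y x) P = poly P (tau x)"
  by (simp add: y_def pr_gam)

lemma adjacent_pos:
  assumes "x \<in> V" "g x < t - 1" "z \<in> V" "z \<noteq> x" "z \<noteq> ptn x"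
  shows "(s x - s z) * (s (ptn x) - s z) > 0"
proof -
  have p: "ptn x \<in> V" "g (ptn x) = pi (g x)" using ptn assms by auto
  have "g z \<noteq> g x" using assms injg by (auto simp: inj_on_def)
  moreover have "g z \<noteq> g (ptn x)" using assms injg p by (auto simp: inj_on_def)
  ultimately have "(g z < g x \<and> g z < pi (g x)) \<or> (g z > g x \<and> g z > pi (g x))"
    using p by (auto simp: pi_def)
  then show ?thesis
    unfolding s_def p(2) by (auto intro: mult_pos_pos mult_neg_neg)
qed

lemma gp:
  assumes v: "v \<in> V" and Y: "Y \<subseteq> V" "card Y \<le> t"
    and rel: "\<forall>j<t. (\<Sum>x\<in>Y. c x * zz v x j) = 0"
  shows "\<forall>x\<in>Y. c x = 0"
proof -
  have finY: "finite Y" using Y finV finite_subset by blast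
  show ?thesis
  proof (cases "v \<in> Y")
    case False
    have "\<forall>j<t. (\<Sum>x\<in>Y. c x * s x ^ j) = 0"
    proof (intro allI impI)
      fix j assume j: "j < t"
      have "(\<Sum>x\<in>Y. c x * s x ^ j) = (\<Sum>x\<in>Y. c x * zz v x j)"
        by (rule sum.cong) (use False j in \<open>auto simp: zz_def q_at\<close>)
      then show "(\<Sum>x\<in>Y. c x * s x ^ j) = 0" using rel j by simp
    qed
    then show ?thesis
      using vandermonde[OF finY Y(2) inj_on_subset[OF inj_s Y(1)]] by blast
  next
    case vY: True
    show ?thesis
    proof (cases "g v < t - 1")
      case False
      define \<sigma> where "\<sigma> x = (if x = v then tau v else s x)" for x
      have "\<forall>j<t. (\<Sum>x\<in>Y. c x * \<sigma> x ^ j) = 0"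
      proof (intro allI impI)
        fix j assume j: "j < t"
        have "(\<Sum>x\<in>Y. c x * \<sigma> x ^ j) = (\<Sum>x\<in>Y. c x * zz v x j)"
          by (rule sum.cong) (use False j in \<open>auto simp: zz_def q_at y_def gam_def \<sigma>_def\<close>)
        then show "(\<Sum>x\<in>Y. c x * \<sigma> x ^ j) = 0" using rel j by simp
      qed
      moreover have "inj_on \<sigma> Y"
      proof (rule inj_onI)
        fix a b assume ab: "a \<in> Y" "b \<in> Y" "\<sigma> a = \<sigma> b"
        have "tau v < 0" "\<And>x. s x \<ge> 0" by (auto simp: tau_def s_def)
        then show "a = b" using ab inj_s Y(1)
          by (auto simp: \<sigma>_def inj_on_def split: if_splits) (metis not_le)+
      qed
      ultimately show ?thesis
        using vandermonde[OF finY Y(2)] by blast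
    next
      case True
      note pt = ptn[OF v True]
      define w where "w = ptn v"
      have yv: "\<And>j. y v j = q v j + q w j" using True by (simp add: y_def w_def)
      show ?thesis
      proof (cases "w \<in> Y")
        case True
        define c' where "c' x = c x + (if x = w then c v else 0)" for x
        have "(\<Sum>x\<in>Y. c x * zz v x j) = (\<Sum>x\<in>Y. c' x * q x j)" for j
        proof -
          have "(\<Sum>x\<in>Y. c x * zz v x j) = (\<Sum>x\<in>Y. c x * q x j + (if x = v then c v * q w j else 0))"
            by (rule sum.cong) (auto simp: zz_def yv algebra_simps)
          also have "\<dots> = (\<Sum>x\<in>Y. c x * q x j) + c v * q w j"
            using vY finY by (simp add: sum.distrib)
          also have "\<dots> = (\<Sum>x\<in>Y. c x * q x j + (if x = w then c v * q x j else 0))"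
            using True finY by (simp add: sum.distrib)
          also have "\<dots> = (\<Sum>x\<in>Y. c' x * q x j)"
            by (rule sum.cong) (auto simp: c'_def algebra_simps)
          finally show ?thesis .
        qed
        then have "\<forall>j<t. (\<Sum>x\<in>Y. c' x * s x ^ j) = 0"
          using rel by (simp add: q_at)
        then have c'0: "\<forall>x\<in>Y. c' x = 0"
          using vandermonde[OF finY Y(2) inj_on_subset[OF inj_s Y(1)]] by blast
        have "c v = 0" using c'0[rule_format, OF vY] pt(3) by (simp add: c'_def w_def)
        then show ?thesis using c'0 by (auto simp: c'_def split: if_splits)
      next
        case False
        define X where "X = Y - {v}"
        have finX: "finite X" using finY by (simp add: X_def)
        have cardX: "card X < t" using Y(2) vY finY card_gt_0_iff[of Y] by (auto simp: X_def)
        define P where "P = lin X s"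
        have degP: "degree P < t" using degree_lin[OF finX, of s] cardX by (simp add: P_def)
        have "(\<Sum>x\<in>Y. c x * pr t (zz v x) P) = 0"
          by (rule pair_vec[OF rel])
        moreover have "(\<Sum>x\<in>Y. c x * pr t (zz v x) P) = c v * (poly P (s v) + poly P (s w))"
        proof -
          have "(\<Sum>x\<in>Y. c x * pr t (zz v x) P) = c v * pr t (zz v v) P + (\<Sum>x\<in>X. c x * pr t (zz v x) P)"
            using finY vY by (simp add: X_def sum.remove)
          moreover have "(\<Sum>x\<in>X. c x * pr t (zz v x) P) = 0"
          proof (rule sum.neutral, intro ballI)
            fix x assume x: "x \<in> X"
            then have "pr t (zz v x) P = poly P (s x)" by (auto simp: X_def zz_def pr_q degP)
            also have "\<dots> = 0" unfolding P_def by (rule poly_lin_zero[OF finX x])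
            finally show "c x * pr t (zz v x) P = 0" by simp
          qed
          moreover have "pr t (zz v v) P = poly P (s v) + poly P (s w)"
            using pr_y1[OF degP True] by (simp add: zz_def w_def)
          ultimately show ?thesis by simp
        qed
        moreover have "poly P (s v) * poly P (s w) > 0"
        proof -
          have "poly P (s v) * poly P (s w) = (\<Prod>x\<in>X. (s v - s x) * (s w - s x))"
            by (simp add: P_def poly_lin prod.distrib)
          also have "\<dots> > 0"
            apply (rule prod_pos)
            using adjacent_pos[OF v True] Y(1) False by (auto simp: X_def w_def)
          finally show ?thesis .
        qed
        then have "poly P (s v) + poly P (s w) \<noteq> 0"
          by (metis add_eq_0_iff mult_minus_left neg_less_0_iff_less not_square_less_zero)
        ultimately have cv: "c v = 0" by simp
        have "\<forall>j<t. (\<Sum>x\<in>X. c x * s x ^ j) = 0"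
        proof (intro allI impI)
          fix j assume j: "j < t"
          have "(\<Sum>x\<in>Y. c x * zz v x j) = c v * zz v v j + (\<Sum>x\<in>X. c x * zz v x j)"
            using finY vY by (simp add: X_def sum.remove)
          then have "(\<Sum>x\<in>X. c x * zz v x j) = 0" using rel j cv by simp
          then show "(\<Sum>x\<in>X. c x * s x ^ j) = 0"
            using j by (simp add: X_def zz_def q_at)
        qed
        then have "\<forall>x\<in>X. c x = 0"
          using vandermonde[OF finX less_imp_le[OF cardX] inj_on_subset[OF inj_s]] Y(1)
          by (auto simp: X_def)
        then show ?thesis using cv by (auto simp: X_def)
      qed
    qed
  qed
qed

end



lemma loop_edges_img: "loop_edges S = (\<lambda>(u, v). {u, v}) ` (S \<times> S)"
  by (auto simp: loop_edges_def)

lemma finite_loop_edges: "finite S \<Longrightarrow> finite (loop_edges S)"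
  by (simp add: loop_edges_img)

lemma star_img: "star v X = (\<lambda>x. {v, x}) ` X"
  by (auto simp: star_def)

lemma inj_star: "inj_on (\<lambda>x. {v, x}) X"
  by (auto simp: inj_on_def doubleton_eq_iff)

lemma card_star: "card (star v X) = card X"
  by (simp add: star_img card_image[OF inj_star])

lemma star_sub: "v \<in> S \<Longrightarrow> X \<subseteq> S \<Longrightarrow> star v X \<subseteq> loop_edges S"
  by (auto simp: star_def loop_edges_def)

lemma loop_edges_insert:
  "loop_edges (insert x S) = loop_edges S \<union> star x (insert x S)"
  by (auto simp: loop_edges_def star_def)

lemma card_loop_edges: "finite S \<Longrightarrow> card (loop_edges S) = (card S + 1) choose 2"
proof (induction S rule: finite_induct)
  case empty
  then show ?case by (simp add: loop_edges_def)
next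
  case (insert x S)
  have a: "\<forall>e\<in>loop_edges S. x \<notin> e" unfolding loop_edges_def using insert(2) by blast
  have b: "\<forall>e\<in>star x (insert x S). x \<in> e" by (auto simp: star_def)
  have disj: "loop_edges S \<inter> star x (insert x S) = {}"
    using a b by blast
  have "card (loop_edges (insert x S)) = card (loop_edges S) + card (star x (insert x S))"
    unfolding loop_edges_insert
    by (rule card_Un_disjoint[OF _ _ disj]) (use insert(1) in \<open>auto simp: finite_loop_edges star_img\<close>)
  also have "\<dots> = ((card S + 1) choose 2) + (card S + 1)"
    using insert by (simp add: card_star)
  also have "\<dots> = (card (insert x S) + 1) choose 2"
    using insert(1,2) by (simp add: numeral_2_eq_2)
  finally show ?case .
qed

lemma mrank_eq:
  assumes fin: "finite X" and le: "\<And>I. I \<subseteq> X \<Longrightarrow> ind I \<Longrightarrow> card I \<le> k"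
    and ex: "Iz \<subseteq> X" "ind Iz" "card Iz = k"
  shows "mrank ind X = k"
  unfolding mrank_def
proof (rule Max_eqI)
  show "finite (card ` {I. I \<subseteq> X \<and> ind I})"
    using fin by (auto intro: finite_subset[of _ "Pow X"])
  show "\<And>y. y \<in> card ` {I. I \<subseteq> X \<and> ind I} \<Longrightarrow> y \<le> k" using le by auto
  show "k \<in> card ` {I. I \<subseteq> X \<and> ind I}" using ex by auto
qed

lemma mrank_uniform:
  assumes "finite V" "X \<subseteq> V"
  shows "mrank (uniform_indep V t) X = min (card X) t"
proof -
  have fX: "finite X" using assms finite_subset by blast
  obtain Y where Y: "Y \<subseteq> X" "card Y = min (card X) t" "finite Y"
    using obtain_subset_with_card_n[of "min (card X) t" X] by auto
  show ?thesis
  proof (rule mrank_eq[OF fX _ Y(1) _ Y(2)])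
    show "\<And>I. I \<subseteq> X \<Longrightarrow> uniform_indep V t I \<Longrightarrow> card I \<le> min (card X) t"
      using fX by (auto simp: uniform_indep_def card_mono)
    show "uniform_indep V t Y" using Y assms by (auto simp: uniform_indep_def)
  qed
qed

definition supp :: "nat \<Rightarrow> (nat \<Rightarrow> real) \<Rightarrow> bool" where
  "supp t z \<longleftrightarrow> (\<forall>j. t \<le> j \<longrightarrow> z j = 0)"

lemma supp_gam: "supp t (gam t s)"
  by (simp add: supp_def gam_def)

lemma supp_add: "supp t u \<Longrightarrow> supp t v \<Longrightarrow> supp t (u + v)"
  by (simp add: supp_def)

definition unitv :: "nat \<Rightarrow> nat \<Rightarrow> real" where
  "unitv k = (\<lambda>i. if i = k then 1 else 0)"

lemma Bm_span_star:
  assumes "supp t z"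
  shows "Bm p z \<in> fv.span ((\<lambda>k. Bm p (unitv k)) ` {..<t})"
proof -
  have "Bm p z = (\<Sum>k<t. fscale (z k) (Bm p (unitv k)))"
  proof (rule ext, clarify)
    fix i j
    have "(\<Sum>k<t. fscale (z k) (Bm p (unitv k))) (i, j)
        = (\<Sum>k<t. (if j = k then z k * p i else 0) + (if i = k then z k * p j else 0))"
      unfolding sum_fun_apply by (rule sum.cong) (auto simp: Bm_def unitv_def)
    also have "\<dots> = (if j < t then z j * p i else 0) + (if i < t then z i * p j else 0)"
      by (simp add: sum.distrib)
    also have "\<dots> = Bm p z (i, j)"
      using assms by (auto simp: supp_def Bm_def algebra_simps)
    finally show "Bm p z (i, j) = (\<Sum>k<t. fscale (z k) (Bm p (unitv k))) (i, j)" by simp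
  qed
  also have "\<dots> \<in> fv.span ((\<lambda>k. Bm p (unitv k)) ` {..<t})"
    apply (rule fv.span_sum) apply (rule fv.span_scale) apply (rule fv.span_base) by auto
  finally show ?thesis .
qed

definition Em :: "nat set \<Rightarrow> nat \<times> nat \<Rightarrow> real" where
  "Em e = (\<lambda>(i, j). if {i, j} = e then 1 else 0)"

definition ev :: "(nat \<times> nat \<Rightarrow> real) \<Rightarrow> nat set \<Rightarrow> real" where
  "ev M e = (case SOME (i, j). e = {i, j} of (i, j) \<Rightarrow> M (i, j))"

lemma Bm_span_all:
  assumes "supp t u" "supp t v"
  shows "Bm u v \<in> fv.span (Em ` loop_edges {..<t})"
proof -
  let ?M = "Bm u v"
  have evM: "ev ?M {i, j} = ?M (i, j)" for i j
    unfolding ev_def by (rule edge_case_eq) (simp add: Bm_def algebra_simps)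
  have fin: "finite (loop_edges {..<t})" by (simp add: finite_loop_edges)
  have "?M = (\<Sum>e\<in>loop_edges {..<t}. fscale (ev ?M e) (Em e))"
  proof (rule ext, clarify)
    fix i j
    have "(\<Sum>e\<in>loop_edges {..<t}. fscale (ev ?M e) (Em e)) (i, j)
        = (\<Sum>e\<in>loop_edges {..<t}. if {i, j} = e then ev ?M e else 0)"
      unfolding sum_fun_apply by (rule sum.cong) (auto simp: Em_def)
    also have "\<dots> = (if {i, j} \<in> loop_edges {..<t} then ev ?M {i, j} else 0)"
      using fin by simp
    also have "\<dots> = ?M (i, j)"
    proof (cases "i < t \<and> j < t")
      case True
      then have "{i, j} \<in> loop_edges {..<t}" by (auto simp: loop_edges_def)
      then show ?thesis by (simp add: evM)
    next
      case False
      then have "{i, j} \<notin> loop_edges {..<t}"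
        by (auto simp: loop_edges_def doubleton_eq_iff)
      moreover have "?M (i, j) = 0" using False assms by (auto simp: supp_def Bm_def)
      ultimately show ?thesis by simp
    qed
    finally show "?M (i, j) = (\<Sum>e\<in>loop_edges {..<t}. fscale (ev ?M e) (Em e)) (i, j)" by simp
  qed
  also have "\<dots> \<in> fv.span (Em ` loop_edges {..<t})"
    apply (rule fv.span_sum) apply (rule fv.span_scale) apply (rule fv.span_base) by auto
  finally show ?thesis .
qed



context cfg
begin

definition NN :: "'a set set \<Rightarrow> bool" where
  "NN I \<longleftrightarrow> I \<subseteq> loop_edges V \<and> inj_on phi I \<and> fv.independent (phi ` I)"

lemma supp_q: "supp t (q x)" by (simp add: q_def supp_gam)
lemma supp_y: "supp t (y x)" by (simp add: y_def supp_q supp_add supp_gam)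
lemma supp_zz: "supp t (zz v x)" by (simp add: zz_def supp_q supp_y)

lemma finE: "finite (loop_edges V)" using finV by (rule finite_loop_edges)

lemma phi_span: "e \<in> loop_edges V \<Longrightarrow> phi e \<in> fv.span (Em ` loop_edges {..<t})"
proof -
  assume "e \<in> loop_edges V"
  then obtain a b where "e = {a, b}" by (auto simp: loop_edges_def)
  then show ?thesis by (simp add: phi_eq Bm_span_all supp_q supp_zz)
qed

lemma NN_card_le: "NN I \<Longrightarrow> card I \<le> (t + 1) choose 2"
proof -
  assume I: "NN I"
  have "finite I" using I finE by (auto simp: NN_def intro: finite_subset)
  have "card (phi ` I) \<le> card (Em ` loop_edges {..<t})"
    using fv.independent_span_bound[of "Em ` loop_edges {..<t}" "phi ` I"] I phi_span
    by (auto simp: NN_def finite_loop_edges)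
  also have "\<dots> \<le> card (loop_edges {..<t::nat})"
    by (rule card_image_le) (simp add: finite_loop_edges)
  also have "\<dots> = (t + 1) choose 2" by (simp add: card_loop_edges)
  finally show ?thesis using I by (simp add: NN_def card_image)
qed

lemma NN_star_le_t:
  assumes "NN I" "I \<subseteq> star v X" "v \<in> V"
  shows "card I \<le> t"
proof -
  have "card (phi ` I) \<le> card ((\<lambda>k. Bm (q v) (unitv k)) ` {..<t})"
  proof (rule conjunct2[OF fv.independent_span_bound])
    show "finite ((\<lambda>k. Bm (q v) (unitv k)) ` {..<t})" by simp
    show "fv.independent (phi ` I)" using assms by (simp add: NN_def)
    show "phi ` I \<subseteq> fv.span ((\<lambda>k. Bm (q v) (unitv k)) ` {..<t})"
      using assms(2) by (auto simp: star_def phi_eq intro!: Bm_span_star supp_zz)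
  qed
  also have "\<dots> \<le> t" using card_image_le[of "{..<t}"] by simp
  finally show ?thesis using assms by (simp add: NN_def card_image)
qed

lemma NN_matroid: "matroid (loop_edges V) NN"
  unfolding matroid_def
proof (intro conjI allI impI)
  show "finite (loop_edges V)" by (rule finE)
  show "\<And>I. NN I \<Longrightarrow> I \<subseteq> loop_edges V" by (simp add: NN_def)
  show "NN {}" by (simp add: NN_def fv.independent_empty)
  show "\<And>I J. NN J \<and> I \<subseteq> J \<Longrightarrow> NN I"
    by (auto simp: NN_def intro: inj_on_subset) (meson fv.independent_mono image_mono)
  fix I J
  assume a: "NN I \<and> NN J \<and> card I < card J"
  then have I: "NN I" and J: "NN J" and lt: "card I < card J" by auto
  have finI: "finite I" using I finE by (auto simp: NN_def intro: finite_subset)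
  show "\<exists>x\<in>J - I. NN (insert x I)"
  proof (rule ccontr)
    assume no: "\<not> (\<exists>x\<in>J - I. NN (insert x I))"
    have sub: "phi ` J \<subseteq> fv.span (phi ` I)"
    proof
      fix w assume "w \<in> phi ` J"
      then obtain x where x: "x \<in> J" "w = phi x" by auto
      show "w \<in> fv.span (phi ` I)"
      proof (cases "phi x \<in> phi ` I")
        case True
        then show ?thesis using x by (auto intro: fv.span_base)
      next
        case False
        then have xI: "x \<notin> I" by auto
        have "inj_on phi (insert x I)" using I False by (auto simp: NN_def)
        moreover have "insert x I \<subseteq> loop_edges V" using I J x by (auto simp: NN_def)
        moreover have "\<not> NN (insert x I)" using no x xI by auto
        ultimately have "\<not> fv.independent (insert (phi x) (phi ` I))"
          by (simp add: NN_def)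
        then show ?thesis using I False x by (auto simp: NN_def fv.independent_insert split: if_splits)
      qed
    qed
    have "card (phi ` J) \<le> card (phi ` I)"
      using fv.independent_span_bound[OF _ _ sub] finI J by (simp add: NN_def)
    then have "card J \<le> card I" using I J by (simp add: NN_def card_image)
    then show False using lt by simp
  qed
qed

lemma NN_coef:
  assumes "I \<subseteq> loop_edges V"
    and "\<And>c. (\<Sum>e\<in>I. fscale (c e) (phi e)) = 0 \<Longrightarrow> \<forall>e\<in>I. c e = 0"
  shows "NN I"
proof -
  have "finite I" using assms finE finite_subset by blast
  then show ?thesis using fam_indep[of I phi] assms by (simp add: NN_def)
qed

lemma star_indep:
  assumes v: "v \<in> V" and Y: "Y \<subseteq> V" "card Y \<le> t"
  shows "NN (star v Y)"
proof (rule NN_coef)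
  show "star v Y \<subseteq> loop_edges V" using v Y(1) by (rule star_sub)
  fix c assume rel: "(\<Sum>e\<in>star v Y. fscale (c e) (phi e)) = 0"
  define d where "d x = c {v, x}" for x
  define Z where "Z j = (\<Sum>x\<in>Y. d x * zz v x j)" for j
  have "(\<Sum>x\<in>Y. fscale (d x) (Bm (q v) (zz v x))) = 0"
    using rel unfolding star_img sum.reindex[OF inj_star] by (simp add: d_def phi_eq)
  then have ent: "q v i * Z j + Z i * q v j = 0" for i j
  proof -
    assume h: "(\<Sum>x\<in>Y. fscale (d x) (Bm (q v) (zz v x))) = 0"
    have "0 = (\<Sum>x\<in>Y. fscale (d x) (Bm (q v) (zz v x))) (i, j)" using h by simp
    also have "\<dots> = q v i * Z j + Z i * q v j"
      by (simp add: sum_fun_apply Bm_def Z_def sum_distrib_left sum_distrib_right sum.distrib algebra_simps)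
    finally show ?thesis by simp
  qed
  have "Z 0 = 0" using ent[of 0 0] q0 by simp
  then have "Z j = 0" for j using ent[of 0 j] q0 by simp
  then have "\<forall>x\<in>Y. d x = 0"
    using gp[OF v Y, of d] by (simp add: Z_def)
  then show "\<forall>e\<in>star v Y. c e = 0" by (auto simp: star_def d_def)
qed

lemma NN_star_rank:
  assumes v: "v \<in> V" and X: "X \<subseteq> V"
  shows "mrank NN (star v X) = min (card X) t"
proof -
  have fX: "finite X" using X finV finite_subset by blast
  obtain Y where Y: "Y \<subseteq> X" "card Y = min (card X) t" "finite Y"
    using obtain_subset_with_card_n[of "min (card X) t" X] by auto
  show ?thesis
  proof (rule mrank_eq)
    show "finite (star v X)" using fX by (simp add: star_img)
    show "star v Y \<subseteq> star v X" using Y by (auto simp: star_def)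
    show "NN (star v Y)" using star_indep[OF v] Y X by auto
    show "card (star v Y) = min (card X) t" using Y by (simp add: card_star)
    fix I assume I: "I \<subseteq> star v X" "NN I"
    have "card I \<le> card (star v X)"
      using I fX by (intro card_mono) (auto simp: star_img)
    moreover have "card I \<le> t" using NN_star_le_t[OF I(2) I(1) v] .
    ultimately show "card I \<le> min (card X) t" by (simp add: card_star)
  qed
qed

end



context cfg
begin

definition S1 :: "'a set" where "S1 = {x\<in>V. g x < t - 1}"
definition cc :: 'a where "cc = inv_into V g (t - 1)"
definition dd :: 'a where "dd = inv_into V g t"
definition L :: "real poly" where "L = lin S1 s"
definition La :: "'a \<Rightarrow> real poly" where "La a = lin (S1 - {a}) s"

lemma S1V: "S1 \<subseteq> V" by (auto simp: S1_def)
lemma finS1: "finite S1" using finV S1V finite_subset by blast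

lemma card_S1: "card S1 = t - 1"
proof -
  have "g ` S1 = {0..<t - 1}"
  proof
    show "g ` S1 \<subseteq> {0..<t - 1}" by (auto simp: S1_def)
    show "{0..<t - 1} \<subseteq> g ` S1"
    proof
      fix i assume i: "i \<in> {0..<t - 1}"
      then have "i \<in> g ` V" using imgg tV by auto
      then obtain x where "x \<in> V" "g x = i" by auto
      then show "i \<in> g ` S1" using i by (auto simp: S1_def)
    qed
  qed
  moreover have "inj_on g S1" using injg S1V inj_on_subset by blast
  ultimately show ?thesis using card_image by fastforce
qed

lemma cd_props: "cc \<in> V" "g cc = t - 1" "dd \<in> V" "g dd = t" "cc \<notin> S1" "dd \<notin> S1" "cc \<noteq> dd"
proof -
  have a: "t - 1 \<in> g ` V" "t \<in> g ` V" using imgg tV by auto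
  show c1: "cc \<in> V" "g cc = t - 1" "dd \<in> V" "g dd = t" using a
    by (auto simp: cc_def dd_def inv_into_into f_inv_into_f)
  show "cc \<notin> S1" "dd \<notin> S1" using c1 by (auto simp: S1_def)
  show "cc \<noteq> dd" using c1 t7 by auto
qed

lemma s_nonneg: "s x \<ge> 0" by (simp add: s_def)
lemma tau_neg: "tau x < 0" by (simp add: tau_def)

lemma s_inj': "x \<in> V \<Longrightarrow> z \<in> V \<Longrightarrow> s x = s z \<Longrightarrow> x = z"
  using inj_s by (auto simp: inj_on_def)

lemma degL: "degree L < t"
  using degree_lin[OF finS1, of s] card_S1 t7 by (simp add: L_def)

lemma degLa: "degree (La a) < t"
proof -
  have "degree (La a) \<le> card (S1 - {a})" unfolding La_def by (rule degree_lin) (simp add: finS1)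
  also have "\<dots> \<le> card S1" by (rule card_mono) (auto simp: finS1)
  finally show ?thesis using card_S1 t7 by simp
qed

lemma L_zero: "a \<in> S1 \<Longrightarrow> poly L (s a) = 0"
  unfolding L_def by (rule poly_lin_zero[OF finS1])

lemma L_nz_s: "x \<in> V \<Longrightarrow> x \<notin> S1 \<Longrightarrow> poly L (s x) \<noteq> 0"
  unfolding L_def using S1V s_inj' by (intro poly_lin_nz[OF finS1]) blast

lemma L_nz_tau: "poly L (tau x) \<noteq> 0"
  unfolding L_def using s_nonneg tau_neg by (intro poly_lin_nz[OF finS1]) (metis not_le)

lemma La_zero: "a \<in> S1 \<Longrightarrow> b \<in> S1 \<Longrightarrow> b \<noteq> a \<Longrightarrow> poly (La a) (s b) = 0"
  unfolding La_def by (rule poly_lin_zero) (auto simp: finS1)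

lemma La_nz: "a \<in> S1 \<Longrightarrow> poly (La a) (s a) \<noteq> 0"
  unfolding La_def using S1V s_inj' by (intro poly_lin_nz) (auto simp: finS1)

lemma S1_g: "a \<in> S1 \<Longrightarrow> g a < t - 1" by (simp add: S1_def)

lemma ptn_S1: "a \<in> S1 \<Longrightarrow> ptn a \<in> S1" "a \<in> S1 \<Longrightarrow> ptn a \<noteq> a"
  using ptn[of a] S1V by (auto simp: S1_def)

lemma pr_zz_S1:
  assumes "x \<in> S1" "z \<in> S1" "degree P < t"
  shows "pr t (zz x z) P = (if z = x then poly P (s x) + poly P (s (ptn x)) else poly P (s z))"
  using assms pr_y1[OF assms(3) S1_g[OF assms(1)]] by (simp add: zz_def pr_q)

lemma prL_zz: "x \<in> S1 \<Longrightarrow> z \<in> S1 \<Longrightarrow> pr t (zz x z) L = 0"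
  by (simp add: pr_zz_S1 degL L_zero ptn_S1)

lemma prL_q: "x \<in> S1 \<Longrightarrow> pr t (q x) L = 0"
  by (simp add: pr_q degL L_zero)

lemma K1_edge: "e \<in> loop_edges S1 \<Longrightarrow> \<exists>x z. x \<in> S1 \<and> z \<in> S1 \<and> e = {x, z}"
  by (auto simp: loop_edges_def)

lemma pm_K1_L: "e \<in> loop_edges S1 \<Longrightarrow> pm t L Q (phi e) = 0"
  by (auto dest!: K1_edge simp: phi_eq pm_Bm prL_zz prL_q)

lemma clique_indep:
  assumes rel: "(\<Sum>e\<in>loop_edges S1. fscale (c e) (phi e)) = 0"
  shows "\<forall>e\<in>loop_edges S1. c e = 0"
proof -
  have finK: "finite (loop_edges S1)" by (simp add: finS1 finite_loop_edges)
  have loops: "c {a} = 0" if a: "a \<in> S1" for a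
  proof -
    have r: "(\<Sum>e\<in>loop_edges S1. c e * pm t (La a) (La a) (phi e)) = 0"
      by (rule pm_rel[OF rel])
    have aK: "{a} \<in> loop_edges S1" using a by (auto simp: loop_edges_def)
    have "(\<Sum>e\<in>loop_edges S1. c e * pm t (La a) (La a) (phi e))
        = c {a} * pm t (La a) (La a) (phi {a}) + (\<Sum>e\<in>loop_edges S1 - {{a}}. c e * pm t (La a) (La a) (phi e))"
      using finK aK by (simp add: sum.remove)
    moreover have "(\<Sum>e\<in>loop_edges S1 - {{a}}. c e * pm t (La a) (La a) (phi e)) = 0"
    proof (rule sum.neutral, intro ballI)
      fix e assume e: "e \<in> loop_edges S1 - {{a}}"
      then obtain x z where xz: "x \<in> S1" "z \<in> S1" "e = {x, z}" using K1_edge by blast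
      have "pm t (La a) (La a) (phi e) = 0"
      proof (cases "x = a")
        case True
        then have "z \<noteq> a" using e xz by auto
        then have "pr t (zz x z) (La a) = 0"
          using True xz a by (simp add: pr_zz_S1 degLa La_zero)
        then show ?thesis by (simp add: xz phi_eq pm_Bm)
      next
        case False
        then have "pr t (q x) (La a) = 0" using xz a by (simp add: pr_q degLa La_zero)
        then show ?thesis by (simp add: xz phi_eq pm_Bm)
      qed
      then show "c e * pm t (La a) (La a) (phi e) = 0" by simp
    qed
    moreover have "pm t (La a) (La a) (phi {a}) = 2 * poly (La a) (s a) * poly (La a) (s a)"
    proof -
      have "phi {a} = Bm (q a) (zz a a)" using phi_eq[of a a] by simp
      moreover have "pr t (zz a a) (La a) = poly (La a) (s a)"
        using a by (simp add: pr_zz_S1 degLa La_zero ptn_S1)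
      ultimately show ?thesis by (simp add: pm_Bm pr_q degLa)
    qed
    ultimately show ?thesis using r La_nz[OF a] by simp
  qed
  have edges: "c {a, b} = 0" if a: "a \<in> S1" and b: "b \<in> S1" and ab: "a \<noteq> b" for a b
  proof -
    have r: "(\<Sum>e\<in>loop_edges S1. c e * pm t (La a) (La b) (phi e)) = 0"
      by (rule pm_rel[OF rel])
    have abK: "{a, b} \<in> loop_edges S1" using a b by (auto simp: loop_edges_def)
    have "(\<Sum>e\<in>loop_edges S1. c e * pm t (La a) (La b) (phi e))
        = c {a, b} * pm t (La a) (La b) (phi {a, b}) + (\<Sum>e\<in>loop_edges S1 - {{a, b}}. c e * pm t (La a) (La b) (phi e))"
      using finK abK by (simp add: sum.remove)
    moreover have "(\<Sum>e\<in>loop_edges S1 - {{a, b}}. c e * pm t (La a) (La b) (phi e)) = 0"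
    proof (rule sum.neutral, intro ballI)
      fix e assume e: "e \<in> loop_edges S1 - {{a, b}}"
      then obtain x z where xz: "x \<in> S1" "z \<in> S1" "e = {x, z}" using K1_edge by blast
      show "c e * pm t (La a) (La b) (phi e) = 0"
      proof (cases "x = z")
        case True
        then show ?thesis using loops xz by simp
      next
        case False
        have pm: "pm t (La a) (La b) (phi e)
            = poly (La a) (s x) * poly (La b) (s z) + poly (La a) (s z) * poly (La b) (s x)"
          using False xz by (simp add: phi_eq pm_Bm zz_def pr_q degLa)
        have "\<not> (x = a \<and> z = b)" "\<not> (z = a \<and> x = b)" using e xz by auto
        then have "pm t (La a) (La b) (phi e) = 0"
          unfolding pm using xz a b by (auto simp: La_zero)
        then show ?thesis by simp
      qed
    qed
    moreover have "pm t (La a) (La b) (phi {a, b}) = poly (La a) (s a) * poly (La b) (s b)"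
      using ab a b by (simp add: phi_eq pm_Bm zz_def pr_q degLa La_zero)
    ultimately show ?thesis using r La_nz[OF a] La_nz[OF b] by simp
  qed
  show ?thesis
  proof
    fix e assume "e \<in> loop_edges S1"
    then obtain x z where xz: "x \<in> S1" "z \<in> S1" "e = {x, z}" using K1_edge by blast
    then show "c e = 0" using loops edges by (cases "x = z") auto
  qed
qed

end



lemma deg3: "degree ([:a, 1:] * [:b, 1:] * [:c, 1::real:]) = 3"
  by (simp add: degree_mult_eq)

lemma deg1: "degree [:a, 1::real:] = 1" by simp

context cfg
begin

lemma vals: "s cc = real t - 1" "s dd = real t" "tau cc = - real t" "tau dd = - 1 - real t"
  using cd_props t7 by (auto simp: s_def tau_def of_nat_diff)

lemma y_cc: "y cc = gam t (tau cc)" using cd_props by (simp add: y_def)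
lemma y_dd: "y dd = gam t (tau dd)"
proof -
  have "\<not> (t < t - 1)" by arith
  then show ?thesis using cd_props by (simp add: y_def)
qed

lemma sum_split_zero:
  assumes "finite A" "finite B" "A \<inter> B = {}"
    and "(\<Sum>e\<in>A \<union> B. fscale (c e) (phi e)) = 0" "\<forall>e\<in>B. c e = 0"
  shows "(\<Sum>e\<in>A. fscale (c e) (phi e)) = 0"
proof -
  have "(\<Sum>e\<in>A \<union> B. fscale (c e) (phi e)) = (\<Sum>e\<in>A. fscale (c e) (phi e)) + (\<Sum>e\<in>B. fscale (c e) (phi e))"
    using assms(1-3) by (rule sum.union_disjoint)
  moreover have "(\<Sum>e\<in>B. fscale (c e) (phi e)) = 0"
    using assms(5) by (intro sum.neutral) (auto simp: fscale_def fun_eq_iff)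
  ultimately show ?thesis using assms(4) by simp
qed

definition Fset :: "'a set set" where "Fset = loop_edges S1 \<union> {{cc}, {dd}, {cc, dd}}"
definition Rset :: "'a set set" where "Rset = loop_edges S1 \<union> star cc (insert cc S1)"

lemma finK1: "finite (loop_edges S1)" by (simp add: finS1 finite_loop_edges)

lemma disjF: "loop_edges S1 \<inter> {{cc}, {dd}, {cc, dd}} = {}"
  using cd_props by (auto simp: loop_edges_def doubleton_eq_iff)

lemma disjR: "loop_edges S1 \<inter> star cc (insert cc S1) = {}"
proof -
  have "\<forall>e\<in>loop_edges S1. cc \<notin> e" using cd_props unfolding loop_edges_def by blast
  moreover have "\<forall>e\<in>star cc (insert cc S1). cc \<in> e" by (auto simp: star_def)
  ultimately show ?thesis by blast
qed

lemma Fset_sub: "Fset \<subseteq> loop_edges V"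
  using S1V cd_props by (auto simp: Fset_def loop_edges_def)

lemma Rset_sub: "Rset \<subseteq> loop_edges V"
  using S1V cd_props by (auto simp: Rset_def loop_edges_def star_def)

lemma card_Rset: "card Rset = (t + 1) choose 2"
proof -
  have "card Rset = card (loop_edges S1) + card (star cc (insert cc S1))"
    unfolding Rset_def by (rule card_Un_disjoint[OF finK1 _ disjR]) (simp add: star_img finS1)
  also have "\<dots> = (t choose 2) + t"
    using card_S1 t7 cd_props finS1 by (simp add: card_loop_edges card_star)
  also have "\<dots> = (t + 1) choose 2"
    using t7 by (simp add: numeral_2_eq_2)
  finally show ?thesis .
qed

lemma Fset_indep: "NN Fset"
proof (rule NN_coef[OF Fset_sub])
  fix c assume rel: "(\<Sum>e\<in>Fset. fscale (c e) (phi e)) = 0"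
  have cdd: "{cc} \<noteq> {dd}" "{cc} \<noteq> {cc, dd}" "{dd} \<noteq> {cc, dd}" "cc \<noteq> dd"
    using cd_props by (auto simp: doubleton_eq_iff)
  have key: "c {cc} * (poly L (s cc) * poly Q (tau cc) + poly L (tau cc) * poly Q (s cc))
     + c {dd} * (poly L (s dd) * poly Q (tau dd) + poly L (tau dd) * poly Q (s dd))
     + c {cc, dd} * (poly L (s cc) * poly Q (s dd) + poly L (s dd) * poly Q (s cc)) = 0"
    if dQ: "degree Q < t" for Q
  proof -
    have r: "(\<Sum>e\<in>Fset. c e * pm t L Q (phi e)) = 0" by (rule pm_rel[OF rel])
    have "(\<Sum>e\<in>Fset. c e * pm t L Q (phi e)) = (\<Sum>e\<in>loop_edges S1. c e * pm t L Q (phi e))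
        + (\<Sum>e\<in>{{cc}, {dd}, {cc, dd}}. c e * pm t L Q (phi e))"
      unfolding Fset_def by (rule sum.union_disjoint[OF finK1 _ disjF]) simp
    moreover have "(\<Sum>e\<in>loop_edges S1. c e * pm t L Q (phi e)) = 0"
      by (rule sum.neutral) (simp add: pm_K1_L)
    moreover have "phi {cc} = Bm (q cc) (y cc)" using phi_eq[of cc cc] by (simp add: zz_def)
    moreover have "phi {dd} = Bm (q dd) (y dd)" using phi_eq[of dd dd] by (simp add: zz_def)
    moreover have "phi {cc, dd} = Bm (q cc) (q dd)" using phi_eq[of cc dd] cdd by (simp add: zz_def)
    ultimately show ?thesis using r cdd dQ
      by (simp add: pm_Bm pr_q y_cc y_dd pr_gam degL algebra_simps)
  qed
  have Lc: "poly L (s cc) \<noteq> 0" "poly L (s dd) \<noteq> 0"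
    using L_nz_s cd_props by auto
  have c1: "c {cc} = 0"
    using key[of "[:- s cc, 1:] * [:- s dd, 1:] * [:- tau dd, 1:]"] Lc t7
    by (simp add: deg3 vals algebra_simps)
  have c2: "c {dd} = 0"
  proof -
    have "- (real t * (poly L (real t) * c {dd})) = real t * (real t * (2 * (poly L (real t) * c {dd})))"
      using key[of "[:- s cc, 1:] * [:- s dd, 1:] * [:- tau cc, 1:]"] Lc t7
      by (simp add: deg3 vals algebra_simps)
    then have "(poly L (real t) * c {dd}) * (real t * (2 * real t + 1)) = 0"
      by (simp add: algebra_simps)
    moreover have "real t * (2 * real t + 1) \<noteq> 0" using t7 by simp
    ultimately show ?thesis using Lc vals by simp
  qed
  have c3: "c {cc, dd} = 0"
    using key[of "[:- s cc, 1:]"] Lc t7 c1 c2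
    by (simp add: vals algebra_simps)
  have "(\<Sum>e\<in>loop_edges S1. fscale (c e) (phi e)) = 0"
    by (rule sum_split_zero[OF finK1 _ disjF rel[unfolded Fset_def]]) (use c1 c2 c3 in auto)
  then have "\<forall>e\<in>loop_edges S1. c e = 0" by (rule clique_indep)
  then show "\<forall>e\<in>Fset. c e = 0" using c1 c2 c3 by (auto simp: Fset_def)
qed

lemma Rset_indep: "NN Rset"
proof (rule NN_coef[OF Rset_sub])
  fix c assume rel: "(\<Sum>e\<in>Rset. fscale (c e) (phi e)) = 0"
  have ccS: "cc \<notin> S1" using cd_props by simp
  have key: "c {cc} * pm t L Q (Bm (q cc) (y cc))
       + (\<Sum>x\<in>S1. c {cc, x} * (poly L (s cc) * poly Q (s x))) = 0"
    if dQ: "degree Q < t" for Q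
  proof -
    have r: "(\<Sum>e\<in>Rset. c e * pm t L Q (phi e)) = 0" by (rule pm_rel[OF rel])
    have "(\<Sum>e\<in>Rset. c e * pm t L Q (phi e)) = (\<Sum>e\<in>loop_edges S1. c e * pm t L Q (phi e))
        + (\<Sum>e\<in>star cc (insert cc S1). c e * pm t L Q (phi e))"
      unfolding Rset_def by (rule sum.union_disjoint[OF finK1 _ disjR]) (simp add: star_img finS1)
    moreover have "(\<Sum>e\<in>loop_edges S1. c e * pm t L Q (phi e)) = 0"
      by (rule sum.neutral) (simp add: pm_K1_L)
    moreover have "(\<Sum>e\<in>star cc (insert cc S1). c e * pm t L Q (phi e))
        = (\<Sum>x\<in>insert cc S1. c {cc, x} * pm t L Q (Bm (q cc) (zz cc x)))"
      unfolding star_img sum.reindex[OF inj_star] by (simp add: phi_eq)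
    moreover have "\<dots> = c {cc} * pm t L Q (Bm (q cc) (y cc))
        + (\<Sum>x\<in>S1. c {cc, x} * pm t L Q (Bm (q cc) (zz cc x)))"
      using ccS finS1 by (simp add: zz_def)
    moreover have "(\<Sum>x\<in>S1. c {cc, x} * pm t L Q (Bm (q cc) (zz cc x)))
        = (\<Sum>x\<in>S1. c {cc, x} * (poly L (s cc) * poly Q (s x)))"
    proof (rule sum.cong)
      fix x assume x: "x \<in> S1"
      then have "x \<noteq> cc" using ccS by auto
      then show "c {cc, x} * pm t L Q (Bm (q cc) (zz cc x)) = c {cc, x} * (poly L (s cc) * poly Q (s x))"
        using x dQ by (simp add: zz_def pm_Bm pr_q degL L_zero)
    qed simp
    ultimately show ?thesis using r by simp
  qed
  have Lc: "poly L (s cc) \<noteq> 0" using L_nz_s cd_props by auto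
  have c1: "c {cc} = 0"
  proof -
    have "pm t L L (Bm (q cc) (y cc)) = 2 * poly L (s cc) * poly L (tau cc)"
      by (simp add: pm_Bm pr_q y_cc pr_gam degL)
    moreover have "(\<Sum>x\<in>S1. c {cc, x} * (poly L (s cc) * poly L (s x))) = 0"
      by (rule sum.neutral) (simp add: L_zero)
    ultimately show ?thesis using key[OF degL] Lc L_nz_tau[of cc] by simp
  qed
  have c2: "c {cc, b} = 0" if b: "b \<in> S1" for b
  proof -
    have "(\<Sum>x\<in>S1. c {cc, x} * (poly L (s cc) * poly (La b) (s x)))
        = c {cc, b} * (poly L (s cc) * poly (La b) (s b))"
      apply (rule sum.remove[OF finS1 b, THEN trans])
      using b by (auto intro!: sum.neutral simp: La_zero)
    then show ?thesis using key[OF degLa, of b] c1 Lc La_nz[OF b] by simp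
  qed
  have cT: "\<forall>e\<in>star cc (insert cc S1). c e = 0"
    using c1 c2 by (auto simp: star_def)
  have "(\<Sum>e\<in>loop_edges S1. fscale (c e) (phi e)) = 0"
    by (rule sum_split_zero[OF finK1 _ disjR rel[unfolded Rset_def] cT]) (simp add: star_img finS1)
  then have "\<forall>e\<in>loop_edges S1. c e = 0" by (rule clique_indep)
  then show "\<forall>e\<in>Rset. c e = 0" using cT by (auto simp: Rset_def)
qed

lemma NN_rank: "mrank NN (loop_edges V) = (t + 1) choose 2"
  by (rule mrank_eq[where Iz=Rset]) (use NN_card_le in \<open>auto simp: finE Rset_sub Rset_indep card_Rset\<close>)

end



lemma dep_many:
  fixes p :: "'x \<Rightarrow> nat \<Rightarrow> real"
  assumes fin: "finite T" and card: "t < card T"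
  shows "\<exists>lam. (\<forall>i<t. (\<Sum>x\<in>T. lam x * p x i) = 0) \<and> (\<exists>x\<in>T. lam x \<noteq> 0)"
proof -
  define w where "w x = (\<lambda>i. if i < t then p x i else 0)" for x
  show ?thesis
  proof (cases "inj_on w T")
    case False
    then obtain a b where ab: "a \<in> T" "b \<in> T" "a \<noteq> b" "w a = w b" by (auto simp: inj_on_def)
    define lam where "lam x = (if x = a then 1 else if x = b then -1 else (0::real))" for x
    have "(\<Sum>x\<in>T. lam x * p x i) = p a i - p b i" for i
    proof -
      have "(\<Sum>x\<in>T. lam x * p x i) = (\<Sum>x\<in>T. (if x = a then p a i else 0) + (if x = b then - p b i else 0))"
        by (rule sum.cong) (auto simp: lam_def ab)
      also have "\<dots> = p a i - p b i" using fin ab by (simp add: sum.distrib)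
      finally show ?thesis .
    qed
    moreover have "\<forall>i<t. p a i = p b i"
    proof (intro allI impI)
      fix i assume "i < t"
      then show "p a i = p b i" using fun_cong[OF ab(4), of i] by (simp add: w_def)
    qed
    ultimately show ?thesis using ab by (intro exI[of _ lam]) (auto simp: lam_def)
  next
    case True
    have sp: "w ` T \<subseteq> fv.span (unitv ` {..<t})"
    proof
      fix v assume "v \<in> w ` T"
      then obtain x where x: "v = w x" by auto
      have "w x = (\<Sum>k<t. fscale (p x k) (unitv k))"
      proof
        fix i
        have "(\<Sum>k<t. fscale (p x k) (unitv k)) i = (\<Sum>k<t. if i = k then p x k else 0)"
          unfolding sum_fun_apply by (rule sum.cong) (auto simp: unitv_def)
        then show "w x i = (\<Sum>k<t. fscale (p x k) (unitv k)) i" by (simp add: w_def)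
      qed
      also have "\<dots> \<in> fv.span (unitv ` {..<t})"
        apply (rule fv.span_sum) apply (rule fv.span_scale) apply (rule fv.span_base) by auto
      finally show "v \<in> fv.span (unitv ` {..<t})" using x by simp
    qed
    have "fv.dependent (w ` T)"
    proof (rule ccontr)
      assume "\<not> fv.dependent (w ` T)"
      then have "card (w ` T) \<le> card (unitv ` {..<t})"
        using fv.independent_span_bound[OF _ _ sp] by simp
      also have "\<dots> \<le> t" using card_image_le[of "{..<t}" unitv] by simp
      finally show False using card card_image[OF True] by simp
    qed
    then obtain u where u: "\<exists>v\<in>w ` T. u v \<noteq> 0" "(\<Sum>v\<in>w ` T. fscale (u v) v) = 0"
      using fv.dependent_finite[of "w ` T"] fin by auto
    have "(\<Sum>x\<in>T. fscale (u (w x)) (w x)) = 0"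
      using u(2) sum.reindex[OF True, of "\<lambda>v. fscale (u v) v"] by simp
    then have "\<forall>i<t. (\<Sum>x\<in>T. u (w x) * p x i) = 0"
    proof (intro allI impI)
      fix i assume i: "i < t"
      assume h: "(\<Sum>x\<in>T. fscale (u (w x)) (w x)) = 0"
      have "(\<Sum>x\<in>T. u (w x) * p x i) = (\<Sum>x\<in>T. fscale (u (w x)) (w x)) i"
        unfolding sum_fun_apply using i by (simp add: w_def)
      then show "(\<Sum>x\<in>T. u (w x) * p x i) = 0" using h by simp
    qed
    then show ?thesis using u(1) by (intro exI[of _ "\<lambda>x. u (w x)"]) auto
  qed
qed

definition cf :: "'x set \<Rightarrow> ('x \<Rightarrow> real) \<Rightarrow> ('x \<Rightarrow> real) \<Rightarrow> 'x set \<Rightarrow> real" where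
  "cf S lam \<mu> e = (\<Sum>ab\<in>{ab. ab \<in> S \<times> S \<and> (\<lambda>(a, b). {a, b}) ab = e}. lam (fst ab) * \<mu> (snd ab))"

lemma clique_identity:
  assumes fin: "finite S"
  shows "(\<Sum>e\<in>loop_edges S. cf S lam \<mu> e * sym_mat p e i j)
       = (\<Sum>a\<in>S. lam a * p a i) * (\<Sum>b\<in>S. \<mu> b * p b j) + (\<Sum>b\<in>S. \<mu> b * p b i) * (\<Sum>a\<in>S. lam a * p a j)"
proof -
  let ?h = "\<lambda>ab. lam (fst ab) * \<mu> (snd ab) * sym_mat p ((\<lambda>(a, b). {a, b}) ab) i j"
  have finSS: "finite (S \<times> S)" using fin by simp
  have "(\<Sum>ab\<in>S \<times> S. ?h ab) = (\<Sum>e\<in>(\<lambda>(a, b). {a, b}) ` (S \<times> S). \<Sum>ab\<in>{ab. ab \<in> S \<times> S \<and> (\<lambda>(a, b). {a, b}) ab = e}. ?h ab)"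
    by (rule sum.image_gen[OF finSS])
  also have "\<dots> = (\<Sum>e\<in>loop_edges S. cf S lam \<mu> e * sym_mat p e i j)"
    unfolding loop_edges_img cf_def sum_distrib_right
    by (rule sum.cong) (auto intro!: sum.cong)
  finally have 1: "(\<Sum>ab\<in>S \<times> S. ?h ab) = (\<Sum>e\<in>loop_edges S. cf S lam \<mu> e * sym_mat p e i j)" .
  have "(\<Sum>ab\<in>S \<times> S. ?h ab) = (\<Sum>a\<in>S. \<Sum>b\<in>S. lam a * \<mu> b * (p a i * p b j + p b i * p a j))"
    by (simp add: sum.cartesian_product sym_mat_eq case_prod_beta)
  also have "\<dots> = (\<Sum>a\<in>S. \<Sum>b\<in>S. lam a * p a i * (\<mu> b * p b j)) + (\<Sum>a\<in>S. \<Sum>b\<in>S. \<mu> b * p b i * (lam a * p a j))"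
    by (simp add: sum.distrib algebra_simps)
  also have "(\<Sum>a\<in>S. \<Sum>b\<in>S. lam a * p a i * (\<mu> b * p b j)) = (\<Sum>a\<in>S. lam a * p a i) * (\<Sum>b\<in>S. \<mu> b * p b j)"
    by (simp add: sum_product)
  also have "(\<Sum>a\<in>S. \<Sum>b\<in>S. \<mu> b * p b i * (lam a * p a j)) = (\<Sum>b\<in>S. \<mu> b * p b i) * (\<Sum>a\<in>S. lam a * p a j)"
    by (simp add: sum_product) (rule sum.swap)
  finally show ?thesis using 1 by simp
qed

lemma cf_loop: "x \<in> S \<Longrightarrow> cf S lam \<mu> {x} = lam x * \<mu> x"
proof -
  assume x: "x \<in> S"
  have "{ab. ab \<in> S \<times> S \<and> (\<lambda>(a, b). {a, b}) ab = {x}} = {(x, x)}"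
    using x by (auto simp: doubleton_eq_iff)
  then show ?thesis by (simp add: cf_def)
qed

lemma loop_in: "x \<in> S \<Longrightarrow> {x} \<in> loop_edges S"
  by (auto simp: loop_edges_def)

lemma single_dep:
  assumes finS: "finite S" and finF: "finite F" and sub: "loop_edges S \<subseteq> F"
    and W: "\<forall>i<t. (\<Sum>a\<in>S. lam a * p a i) = 0" and x: "x \<in> S" "lam x \<noteq> 0"
  shows "\<not> sym_lin_indep t p F"
proof
  assume ind: "sym_lin_indep t p F"
  define \<mu> where "\<mu> b = (if b = x then 1 else (0::real))" for b
  define c where "c e = (if e \<in> loop_edges S then cf S lam \<mu> e else 0)" for e
  have "\<forall>i<t. \<forall>j<t. (\<Sum>e\<in>F. c e * sym_mat p e i j) = 0"
  proof (intro allI impI)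
    fix i j assume ij: "i < t" "j < t"
    have "(\<Sum>e\<in>F. c e * sym_mat p e i j) = (\<Sum>e\<in>loop_edges S. cf S lam \<mu> e * sym_mat p e i j)"
      by (rule sum.mono_neutral_cong_right[OF finF sub]) (auto simp: c_def)
    also have "\<dots> = 0" using ij W by (simp add: clique_identity[OF finS])
    finally show "(\<Sum>e\<in>F. c e * sym_mat p e i j) = 0" .
  qed
  then have "\<forall>e\<in>F. c e = 0" using ind by (simp add: sym_lin_indep_def)
  moreover have "{x} \<in> F" using sub loop_in[OF x(1)] by auto
  moreover have "c {x} = lam x" using x loop_in[OF x(1)] by (simp add: c_def cf_loop \<mu>_def)
  ultimately show False using x by auto
qed

lemma two_clique_dep:
  assumes finA: "finite A" and finB: "finite B" and AB: "A \<inter> B = {}"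
    and F: "F = loop_edges A \<union> loop_edges B"
    and rel: "\<forall>i<t. (\<Sum>x\<in>A. lam x * p x i) + (\<Sum>x\<in>B. lam x * p x i) = 0"
    and nz: "\<exists>x\<in>A \<union> B. lam x \<noteq> 0"
  shows "\<not> sym_lin_indep t p F"
proof -
  have finF: "finite F" using F finA finB by (simp add: finite_loop_edges)
  have disj: "loop_edges A \<inter> loop_edges B = {}"
    using AB by (auto simp: loop_edges_def doubleton_eq_iff)
  show ?thesis
  proof (cases "\<forall>i<t. (\<Sum>a\<in>A. lam a * p a i) = 0")
    case True
    then have WB: "\<forall>i<t. (\<Sum>a\<in>B. lam a * p a i) = 0" using rel by simp
    from nz obtain x where "x \<in> A \<union> B" "lam x \<noteq> 0" by auto
    then show ?thesis
      using single_dep[OF finA finF _ True, of x] single_dep[OF finB finF _ WB, of x] F by auto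
  next
    case False
    then obtain k where k: "k < t" "(\<Sum>a\<in>A. lam a * p a k) \<noteq> 0" by auto
    then obtain x where x: "x \<in> A" "lam x \<noteq> 0"
      by (metis (mono_tags, lifting) mult_eq_0_iff sum.neutral)
    show ?thesis
    proof
      assume ind: "sym_lin_indep t p F"
      define c where "c e = (if e \<in> loop_edges A then cf A lam lam e else - cf B lam lam e)" for e
      have "\<forall>i<t. \<forall>j<t. (\<Sum>e\<in>F. c e * sym_mat p e i j) = 0"
      proof (intro allI impI)
        fix i j assume ij: "i < t" "j < t"
        have "(\<Sum>e\<in>F. c e * sym_mat p e i j)
            = (\<Sum>e\<in>loop_edges A. c e * sym_mat p e i j) + (\<Sum>e\<in>loop_edges B. c e * sym_mat p e i j)"
          unfolding F by (rule sum.union_disjoint) (auto simp: finA finB finite_loop_edges disj)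
        also have "(\<Sum>e\<in>loop_edges B. c e * sym_mat p e i j) = - (\<Sum>e\<in>loop_edges B. cf B lam lam e * sym_mat p e i j)"
          unfolding c_def using disj by (auto simp: sum_negf[symmetric] intro!: sum.cong)
        also have "(\<Sum>e\<in>loop_edges A. c e * sym_mat p e i j) = (\<Sum>e\<in>loop_edges A. cf A lam lam e * sym_mat p e i j)"
          unfolding c_def by simp
        finally show "(\<Sum>e\<in>F. c e * sym_mat p e i j) = 0"
          using rel ij by (simp add: clique_identity finA finB eq_neg_iff_add_eq_0[symmetric])
      qed
      then have "\<forall>e\<in>F. c e = 0" using ind by (simp add: sym_lin_indep_def)
      moreover have "{x} \<in> F" using F loop_in[OF x(1)] by auto
      moreover have "c {x} = lam x * lam x" using x loop_in[OF x(1)] by (simp add: c_def cf_loop)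
      ultimately show False using x by auto
    qed
  qed
qed

context cfg
begin

lemma Fset_two: "Fset = loop_edges S1 \<union> loop_edges {cc, dd}"
  by (auto simp: Fset_def loop_edges_def)

lemma Fset_not_generic: "\<not> generic_sym_power V t Fset"
proof
  assume "generic_sym_power V t Fset"
  then obtain p where ind: "sym_lin_indep t p Fset" by (auto simp: generic_sym_power_def)
  have disj: "S1 \<inter> {cc, dd} = {}" using cd_props by auto
  have finT: "finite (S1 \<union> {cc, dd})" by (simp add: finS1)
  have "card (S1 \<union> {cc, dd}) = t + 1"
    using card_Un_disjoint[OF finS1 _ disj] card_S1 cd_props t7 by simp
  then obtain lam where l: "\<forall>i<t. (\<Sum>x\<in>S1 \<union> {cc, dd}. lam x * p x i) = 0" "\<exists>x\<in>S1 \<union> {cc, dd}. lam x \<noteq> 0"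
    using dep_many[OF finT, of t p] by auto
  have "\<forall>i<t. (\<Sum>x\<in>S1. lam x * p x i) + (\<Sum>x\<in>{cc, dd}. lam x * p x i) = 0"
  proof (intro allI impI)
    fix i assume "i < t"
    then show "(\<Sum>x\<in>S1. lam x * p x i) + (\<Sum>x\<in>{cc, dd}. lam x * p x i) = 0"
      using l(1) sum.union_disjoint[OF finS1 _ disj, of "\<lambda>x. lam x * p x i"] by simp
  qed
  then have "\<not> sym_lin_indep t p Fset"
    by (rule two_clique_dep[OF finS1 finite.insertI[OF finite.insertI[OF finite.emptyI]] disj Fset_two _ l(2)])
  with ind show False by simp
qed

end



lemma exists_maximal_above:
  assumes P0: "P Nz" and mat: "\<And>N. P N \<Longrightarrow> matroid E N" and finE: "finite E"
  shows "\<exists>N'. P N' \<and> weak_le Nz N' \<and> (\<forall>N''. P N'' \<and> weak_le N' N'' \<longrightarrow> N'' = N')"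
proof -
  define f where "f N = card {I. I \<subseteq> E \<and> N I}" for N
  have bound: "\<forall>N. (P N \<and> weak_le Nz N) \<longrightarrow> f N < Suc (card (Pow E))"
  proof (intro allI impI)
    fix N
    have "f N \<le> card (Pow E)" unfolding f_def using finE by (intro card_mono) auto
    then show "f N < Suc (card (Pow E))" by simp
  qed
  have "P Nz \<and> weak_le Nz Nz" using P0 by (simp add: weak_le_def)
  from Lattices_Big.ex_has_greatest_nat[where P = "\<lambda>N. P N \<and> weak_le Nz N" and f = f, OF this bound]
  obtain N' where N': "P N'" "weak_le Nz N'" "\<And>N. P N \<and> weak_le Nz N \<Longrightarrow> f N \<le> f N'"
    by blast
  show ?thesis
  proof (intro exI conjI allI impI)
    show "P N'" "weak_le Nz N'" by (fact N'(1)) (fact N'(2))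
    fix N'' assume h: "P N'' \<and> weak_le N' N''"
    then have "weak_le Nz N''" using N'(2) by (auto simp: weak_le_def)
    then have le: "f N'' \<le> f N'" using N'(3) h by blast
    have sub: "{I. I \<subseteq> E \<and> N' I} \<subseteq> {I. I \<subseteq> E \<and> N'' I}" using h by (auto simp: weak_le_def)
    have fin2: "finite {I. I \<subseteq> E \<and> N'' I}" using finE by (auto intro: finite_subset[of _ "Pow E"])
    have eq: "{I. I \<subseteq> E \<and> N' I} = {I. I \<subseteq> E \<and> N'' I}"
      using card_subset_eq[OF fin2 sub] le card_mono[OF fin2 sub] by (simp add: f_def)
    have s1: "\<And>I. N' I \<Longrightarrow> I \<subseteq> E" using mat[OF N'(1)] unfolding matroid_def by blast
    have s2: "\<And>I. N'' I \<Longrightarrow> I \<subseteq> E" using mat[of N''] h unfolding matroid_def by blast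
    show "N'' = N'"
    proof
      fix I
      show "N'' I = N' I"
      proof
        assume "N'' I"
        then have "I \<in> {I. I \<subseteq> E \<and> N'' I}" using s2 by blast
        then show "N' I" using eq by blast
      next
        assume "N' I"
        then have "I \<in> {I. I \<subseteq> E \<and> N' I}" using s1 by blast
        then show "N'' I" using eq by blast
      qed
    qed
  qed
qed

theorem theorem5p28:
  fixes V :: "'a set" and n t :: nat
  assumes "finite V" and "card V = n" and "t \<ge> 7" and "n \<ge> 2 * t - 2"
  shows "\<not> unique_maximal_sym_power V t (uniform_indep V t) (generic_sym_power V t)"
proof
  assume um: "unique_maximal_sym_power V t (uniform_indep V t) (generic_sym_power V t)"
  obtain h where h: "bij_betw h {0..<card V} V" using ex_bij_betw_nat_finite[OF assms(1)] by blast
  define g where "g = inv_into {0..<card V} h"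
  have bg: "bij_betw g V {0..<card V}" unfolding g_def by (rule bij_betw_inv_into[OF h])
  interpret cfg V t g
  proof
    show "finite V" by (fact assms(1))
    show "inj_on g V" using bg by (simp add: bij_betw_def)
    show "g ` V = {0..<card V}" using bg by (simp add: bij_betw_def)
    show "7 \<le> t" by (fact assms(3))
    show "t + 1 \<le> card V" using assms by simp
  qed
  have sp: "second_sym_power V t (uniform_indep V t) NN"
    unfolding second_sym_power_def
  proof (intro conjI allI impI)
    show "matroid (loop_edges V) NN" by (rule NN_matroid)
    show "mrank NN (loop_edges V) = (t + 1) choose 2" by (rule NN_rank)
    fix X v assume Xv: "X \<subseteq> V \<and> v \<in> V"
    then show "mrank (uniform_indep V t) X = mrank NN (star v X)"
      using mrank_uniform[OF assms(1), of X t] NN_star_rank[of v X] by simp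
  qed
  have notle: "\<not> weak_le NN (generic_sym_power V t)"
    using Fset_indep Fset_not_generic by (auto simp: weak_le_def)
  obtain N' where N': "second_sym_power V t (uniform_indep V t) N'" "weak_le NN N'"
    "\<forall>N''. second_sym_power V t (uniform_indep V t) N'' \<and> weak_le N' N'' \<longrightarrow> N'' = N'"
  proof -
    have mat: "\<And>N. second_sym_power V t (uniform_indep V t) N \<Longrightarrow> matroid (loop_edges V) N"
      by (simp add: second_sym_power_def)
    show ?thesis using exists_maximal_above[where P="second_sym_power V t (uniform_indep V t)" and Nz=NN and E="loop_edges V", OF sp mat finE] that by blast
  qed
  then have "N' = generic_sym_power V t"
    using um unfolding unique_maximal_sym_power_def by blast
  with N'(2) notle show False by simp
qed


end
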